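(* Let $\mathbf{x}_1,\dots,\mathbf{x}_m\in\mathbb{R}^n$ and $y_1,\dots,y_m\in\mathbb{R}$ be such that $y_i=\phi(\mathbf{x}_i)$ for $i=1,\dots,m$, for some function $\phi:\mathbb{R}^n\to\mathbb{R}$. Then for every $\varepsilon>0$ there exist $T>0$ and a function $d_T\in\mathrm{DLSE}_T$ with rational parameters such that $$|d_T(\mathbf{x}_i)-y_i|\leqslant\varepsilon,\quad i=1,\dots,m.$$
   Context: For $T>0$, $\mathrm{LSE}_T$ denotes the class of functions $f_T:\mathbb{R}^n\to\mathbb{R}$ of the form $$f_T(\mathbf{x})=T\log\Big(\sum_{k=1}^K \exp\big(\langle\boldsymbol{\alpha}^{(k)},\mathbf{x}\rangle/T+\beta_k/T\big)\Big)$$ for some positive integer $K$, vectors $\boldsymbol{\alpha}^{(k)}\in\mathbb{R}^n$ and real numbers $\beta_k$. Such a function has rational parameters if $T$ is rational and it can be written in this form with all entries of the $\boldsymbol{\alpha}^{(k)}$ and all $\beta_k$ rational. $\mathrm{DLSE}_T$ is the class of functions $g_T-h_T$ with $g_T,h_T\in\mathrm{LSE}_T$ (same $T$); such a function has rational parameters if $g_T$ and $h_T$ both have rational parameters. *)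

theory Defs
  imports "HOL-Analysis.Analysis"
begin

definition lse_fun :: "real \<Rightarrow> ((real ^ 'n) \<times> real) list \<Rightarrow> real ^ 'n \<Rightarrow> real" where
  "lse_fun T ps x = T * ln (\<Sum>p\<leftarrow>ps. exp ((fst p \<bullet> x) / T + snd p / T))"

definition LSE :: "real \<Rightarrow> (real ^ 'n \<Rightarrow> real) set" where
  "LSE T = {f. \<exists>ps. ps \<noteq> [] \<and> f = lse_fun T ps}"

definition LSE_rat :: "real \<Rightarrow> (real ^ 'n \<Rightarrow> real) set" where
  "LSE_rat T = {f. T \<in> \<rat> \<and> (\<exists>ps. ps \<noteq> [] \<and> f = lse_fun T ps \<and>
      (\<forall>p\<in>set ps. (\<forall>i. fst p $ i \<in> \<rat>) \<and> snd p \<in> \<rat>))}"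

definition DLSE :: "real \<Rightarrow> (real ^ 'n \<Rightarrow> real) set" where
  "DLSE T = {d. \<exists>g h. g \<in> LSE T \<and> h \<in> LSE T \<and> d = (\<lambda>x. g x - h x)}"

definition DLSE_rat :: "real \<Rightarrow> (real ^ 'n \<Rightarrow> real) set" where
  "DLSE_rat T = {d. \<exists>g h. g \<in> LSE_rat T \<and> h \<in> LSE_rat T \<and> d = (\<lambda>x. g x - h x)}"

end

theory Submission
  imports Defs
begin

lemma sl_ge: "(\<forall>q\<in>set ps. 0 \<le> (f q::real)) \<Longrightarrow> p \<in> set ps \<Longrightarrow> f p \<le> sum_list (map f ps)"
proof (induction ps)
  case Nil then show ?case by simp
next
  case (Cons a ps)
  have "0 \<le> sum_list (map f ps)" using Cons.prems(1) by (intro sum_list_nonneg) auto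
  then show ?case using Cons by auto
qed

lemma sl_le: "(\<forall>q\<in>set ps. (f q::real) \<le> B) \<Longrightarrow> sum_list (map f ps) \<le> real (length ps) * B"
  by (induction ps) (auto simp: algebra_simps)

lemma lse_lower:
  assumes "T > 0" "p \<in> set ps"
  shows "fst p \<bullet> x + snd p \<le> lse_fun T ps x"
proof -
  let ?f = "\<lambda>p. exp ((fst p \<bullet> x) / T + snd p / T)"
  have "?f p \<le> sum_list (map ?f ps)" by (rule sl_ge) (use assms in auto)
  moreover have "0 < ?f p" by simp
  ultimately have "ln (?f p) \<le> ln (sum_list (map ?f ps))"
    using ln_le_cancel_iff[of "?f p" "sum_list (map ?f ps)"] by linarith
  hence "T * ln (?f p) \<le> lse_fun T ps x" unfolding lse_fun_def using assms by simp
  moreover have "T * ln (?f p) = fst p \<bullet> x + snd p" using assms by (simp add: field_simps)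
  ultimately show ?thesis by simp
qed

lemma lse_upper:
  assumes "T > 0" "ps \<noteq> []" "\<forall>p\<in>set ps. fst p \<bullet> x + snd p \<le> B"
  shows "lse_fun T ps x \<le> B + T * ln (real (length ps))"
proof -
  let ?f = "\<lambda>p. exp ((fst p \<bullet> x) / T + snd p / T)"
  have le: "\<forall>q\<in>set ps. ?f q \<le> exp (B / T)"
  proof
    fix q assume "q \<in> set ps"
    hence "(fst q \<bullet> x + snd q) / T \<le> B / T" using assms by (intro divide_right_mono) auto
    thus "?f q \<le> exp (B / T)" by (simp add: add_divide_distrib)
  qed
  have pos: "0 < sum_list (map ?f ps)" using assms(2)
    by (cases ps) (auto intro!: add_pos_nonneg sum_list_nonneg)
  have "sum_list (map ?f ps) \<le> real (length ps) * exp (B / T)" by (rule sl_le[OF le])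
  hence "ln (sum_list (map ?f ps)) \<le> ln (real (length ps) * exp (B / T))"
    using pos by simp
  also have "\<dots> = ln (real (length ps)) + B / T" using assms(2) by (simp add: ln_mult)
  finally have "T * ln (sum_list (map ?f ps)) \<le> T * (ln (real (length ps)) + B / T)"
    using assms(1) by (simp add: mult_left_mono)
  moreover have "T * (ln (real (length ps)) + B / T) = B + T * ln (real (length ps))"
    using assms(1) by (simp add: field_simps)
  ultimately show ?thesis unfolding lse_fun_def by linarith
qed

lemma inner_err:
  fixes a b z :: "real ^ 'n"
  assumes "\<And>k. \<bar>a $ k - b $ k\<bar> \<le> \<delta>"
  shows "\<bar>a \<bullet> z - b \<bullet> z\<bar> \<le> \<delta> * (\<Sum>k\<in>UNIV. \<bar>z $ k\<bar>)"
proof -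
  have "\<bar>a \<bullet> z - b \<bullet> z\<bar> = \<bar>\<Sum>k\<in>UNIV. (a $ k - b $ k) * z $ k\<bar>"
    by (simp add: inner_vec_def sum_subtractf algebra_simps)
  also have "\<dots> \<le> (\<Sum>k\<in>UNIV. \<bar>(a $ k - b $ k) * z $ k\<bar>)" by (rule sum_abs)
  also have "\<dots> \<le> (\<Sum>k\<in>UNIV. \<delta> * \<bar>z $ k\<bar>)"
    by (intro sum_mono) (simp add: abs_mult assms mult_right_mono)
  finally show ?thesis by (simp add: sum_distrib_left)
qed

lemma set_map_upt_ex:
  "p \<in> set (map f [1..<m+1]) \<Longrightarrow> \<exists>j\<in>{1..(m::nat)}. p = f j"
  unfolding set_map by (rule imageE) (auto simp del: upt_Suc)

theorem corollary2:
  fixes x :: "nat \<Rightarrow> real ^ 'n" and y :: "nat \<Rightarrow> real"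
    and \<phi> :: "real ^ 'n \<Rightarrow> real" and m :: nat and \<epsilon> :: real
  assumes "\<And>i. i \<in> {1..m} \<Longrightarrow> y i = \<phi> (x i)"
    and "\<epsilon> > 0"
  shows "\<exists>T > 0. \<exists>d \<in> DLSE_rat T. \<forall>i \<in> {1..m}. \<bar>d (x i) - y i\<bar> \<le> \<epsilon>"
proof (cases "m = 0")
  case True
  let ?g = "lse_fun 1 [(0::real^'n, 0::real)]"
  have "?g \<in> LSE_rat 1" unfolding LSE_rat_def by auto
  hence "(\<lambda>z. ?g z - ?g z) \<in> DLSE_rat 1" unfolding DLSE_rat_def by blast
  thus ?thesis using True by (intro exI[of _ 1]) auto
next
  case False
  hence m1: "m \<ge> 1" by simp
  define C where "C = (\<Sum>i\<in>{1..m}. \<Sum>j\<in>{1..m}. \<bar>y j - y i\<bar> / ((x i - x j) \<bullet> (x i - x j)))"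
  have Cbound: "y j - y i \<le> C * ((x i - x j) \<bullet> (x i - x j))" if "i \<in> {1..m}" "j \<in> {1..m}" for i j
  proof (cases "x i = x j")
    case True then show ?thesis using assms(1) that by simp
  next
    case False
    hence pos: "(x i - x j) \<bullet> (x i - x j) > 0" by simp
    have "\<bar>y j - y i\<bar> / ((x i - x j) \<bullet> (x i - x j)) \<le> (\<Sum>j\<in>{1..m}. \<bar>y j - y i\<bar> / ((x i - x j) \<bullet> (x i - x j)))"
      by (rule member_le_sum) (use that in auto)
    also have "\<dots> \<le> C" unfolding C_def
      by (rule member_le_sum[where f = "\<lambda>i. \<Sum>j\<in>{1..m}. \<bar>y j - y i\<bar> / ((x i - x j) \<bullet> (x i - x j))"])
        (use that in \<open>auto intro!: sum_nonneg\<close>)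
    finally have "\<bar>y j - y i\<bar> \<le> C * ((x i - x j) \<bullet> (x i - x j))" using pos by (simp add: field_simps)
    thus ?thesis by simp
  qed
  define S where "S i = (\<Sum>k\<in>UNIV. \<bar>x i $ k\<bar>)" for i
  define R where "R = 1 + (\<Sum>i\<in>{1..m}. S i)"
  have S0: "S i \<ge> 0" for i unfolding S_def by (simp add: sum_nonneg)
  have SR: "S i + 1 \<le> R" if "i \<in> {1..m}" for i
  proof -
    have "S i \<le> (\<Sum>i\<in>{1..m}. S i)" by (rule member_le_sum) (use that S0 in auto)
    thus ?thesis unfolding R_def by simp
  qed
  have Rpos: "R > 0" unfolding R_def using S0 by (simp add: add_pos_nonneg sum_nonneg)
  define \<eta> where "\<eta> = \<epsilon> / 4"
  define \<delta> where "\<delta> = \<eta> / R"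
  have \<delta>pos: "\<delta> > 0" unfolding \<delta>_def \<eta>_def using Rpos assms(2) by simp
  have "\<forall>r. \<exists>q. q \<in> \<rat> \<and> \<bar>q - r\<bar> < \<delta>"
  proof
    fix r
    obtain q where "q \<in> \<rat>" "r < q" "q < r + \<delta>" using Rats_dense_in_real[of r "r + \<delta>"] \<delta>pos by auto
    thus "\<exists>q. q \<in> \<rat> \<and> \<bar>q - r\<bar> < \<delta>" by (intro exI[of _ q]) auto
  qed
  then obtain qa where qa: "\<And>r. qa r \<in> \<rat>" "\<And>r. \<bar>qa r - r\<bar> < \<delta>" by metis
  define A where "A j = (\<chi> k. qa (2 * C * x j $ k))" for j
  define b where "b j = qa (y j - C * (x j \<bullet> x j))" for j
  define c where "c j = qa (- C * (x j \<bullet> x j))" for j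
  have Aerr: "\<bar>A j \<bullet> x i - (2 * C) *\<^sub>R x j \<bullet> x i\<bar> \<le> \<delta> * S i" for i j
    unfolding S_def by (rule inner_err) (use qa(2) in \<open>auto simp: A_def less_imp_le\<close>)
  define ln_m where "ln_m = ln (real m)"
  have lnm: "ln_m \<ge> 0" unfolding ln_m_def using m1 by simp
  obtain T where T: "T \<in> \<rat>" "0 < T" "T < \<epsilon> / (2 * (ln_m + 1))"
    using Rats_dense_in_real[of 0 "\<epsilon> / (2 * (ln_m + 1))"] assms(2) lnm by auto
  have TL: "T * ln_m \<le> \<epsilon> / 2"
  proof -
    have "T * (ln_m + 1) \<le> \<epsilon> / 2" using T(3) lnm by (simp add: field_simps)
    thus ?thesis using T(2) by (simp add: algebra_simps)
  qed
  define psg where "psg = map (\<lambda>j. (A j, b j)) [1..<m+1]"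
  define psh where "psh = map (\<lambda>j. (A j, c j)) [1..<m+1]"
  have ne: "psg \<noteq> []" "psh \<noteq> []" unfolding psg_def psh_def using m1 by auto
  have len: "length psg = m" "length psh = m" unfolding psg_def psh_def by auto
  have Arat: "\<forall>k. A j $ k \<in> \<rat>" for j unfolding A_def using qa(1) by simp
  have g: "lse_fun T psg \<in> LSE_rat T" unfolding LSE_rat_def
  proof (intro CollectI conjI exI[of _ psg])
    show "\<forall>p\<in>set psg. (\<forall>i. fst p $ i \<in> \<rat>) \<and> snd p \<in> \<rat>"
      unfolding psg_def b_def using Arat qa(1) by auto
  qed (use T(1) ne in auto)
  have h: "lse_fun T psh \<in> LSE_rat T" unfolding LSE_rat_def
  proof (intro CollectI conjI exI[of _ psh])
    show "\<forall>p\<in>set psh. (\<forall>i. fst p $ i \<in> \<rat>) \<and> snd p \<in> \<rat>"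
      unfolding psh_def c_def using Arat qa(1) by auto
  qed (use T(1) ne in auto)
  have d: "(\<lambda>z. lse_fun T psg z - lse_fun T psh z) \<in> DLSE_rat T"
    unfolding DLSE_rat_def using g h by blast
  have key: "C * (x i \<bullet> x i) - C * ((x i - x j) \<bullet> (x i - x j)) = (2 * C) *\<^sub>R x j \<bullet> x i - C * (x j \<bullet> x j)" for i j
    by (simp add: inner_diff_left inner_diff_right inner_commute algebra_simps)
  have Cnn: "C \<ge> 0" unfolding C_def by (auto intro!: sum_nonneg)
  have main: "\<bar>lse_fun T psg (x i) - lse_fun T psh (x i) - y i\<bar> \<le> \<epsilon>" if i: "i \<in> {1..m}" for i
  proof -
    let ?Q = "C * (x i \<bullet> x i)"
    have errS: "\<delta> * S i + \<delta> \<le> \<eta>"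
    proof -
      have "\<delta> * (S i + 1) \<le> \<delta> * R" by (rule mult_left_mono[OF SR[OF i]]) (use \<delta>pos in simp)
      moreover have "\<delta> * R = \<eta>" unfolding \<delta>_def using Rpos by simp
      moreover have "\<delta> * S i + \<delta> = \<delta> * (S i + 1)" by (simp add: algebra_simps)
      ultimately show ?thesis by linarith
    qed
    have uerr: "\<bar>(A j \<bullet> x i + b j) - ((2 * C) *\<^sub>R x j \<bullet> x i + y j - C * (x j \<bullet> x j))\<bar> \<le> \<eta>" for j
    proof -
      have "\<bar>b j - (y j - C * (x j \<bullet> x j))\<bar> \<le> \<delta>" using qa(2) b_def less_imp_le by metis
      thus ?thesis using Aerr[of j i] errS by linarith
    qed
    have verr: "\<bar>(A j \<bullet> x i + c j) - ((2 * C) *\<^sub>R x j \<bullet> x i - C * (x j \<bullet> x j))\<bar> \<le> \<eta>" for j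
    proof -
      have "\<bar>c j - (- C * (x j \<bullet> x j))\<bar> \<le> \<delta>" using qa(2) c_def less_imp_le by metis
      thus ?thesis using Aerr[of j i] errS by linarith
    qed
    have nn: "0 \<le> C * ((x i - x j) \<bullet> (x i - x j))" for j using Cnn inner_ge_zero by (rule mult_nonneg_nonneg)
    have gl: "?Q + y i - \<eta> \<le> lse_fun T psg (x i)"
    proof -
      have "(A i, b i) \<in> set psg" unfolding psg_def set_map
        by (rule rev_image_eqI[of i]) (use i in auto)
      from lse_lower[OF T(2) this, of "x i"] have "A i \<bullet> x i + b i \<le> lse_fun T psg (x i)" by simp
      moreover have "(2 * C) *\<^sub>R x i \<bullet> x i - C * (x i \<bullet> x i) = ?Q" unfolding inner_scaleR_left by simp
      ultimately show ?thesis using uerr[of i] by linarith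
    qed
    have gu: "lse_fun T psg (x i) \<le> ?Q + y i + \<eta> + T * ln_m"
    proof -
      have "\<forall>p\<in>set psg. fst p \<bullet> x i + snd p \<le> ?Q + y i + \<eta>"
      proof
        fix p assume pin: "p \<in> set psg"
        obtain j where j: "j \<in> {1..m}" "p = (A j, b j)"
          using set_map_upt_ex[OF pin[unfolded psg_def]] by blast
        show "fst p \<bullet> x i + snd p \<le> ?Q + y i + \<eta>"
          unfolding j(2) fst_conv snd_conv using uerr[of j] key[of i j] Cbound[OF i j(1)] by linarith
      qed
      from lse_upper[OF T(2) ne(1) this] show ?thesis using len unfolding ln_m_def by simp
    qed
    have hl: "?Q - \<eta> \<le> lse_fun T psh (x i)"
    proof -
      have "(A i, c i) \<in> set psh" unfolding psh_def set_map
        by (rule rev_image_eqI[of i]) (use i in auto)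
      from lse_lower[OF T(2) this, of "x i"] have "A i \<bullet> x i + c i \<le> lse_fun T psh (x i)" by simp
      moreover have "(2 * C) *\<^sub>R x i \<bullet> x i - C * (x i \<bullet> x i) = ?Q" unfolding inner_scaleR_left by simp
      ultimately show ?thesis using verr[of i] by linarith
    qed
    have hu: "lse_fun T psh (x i) \<le> ?Q + \<eta> + T * ln_m"
    proof -
      have "\<forall>p\<in>set psh. fst p \<bullet> x i + snd p \<le> ?Q + \<eta>"
      proof
        fix p assume pin: "p \<in> set psh"
        obtain j where j: "j \<in> {1..m}" "p = (A j, c j)"
          using set_map_upt_ex[OF pin[unfolded psh_def]] by blast
        show "fst p \<bullet> x i + snd p \<le> ?Q + \<eta>"
          unfolding j(2) fst_conv snd_conv using verr[of j] key[of i j] nn[of j] by linarith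
      qed
      from lse_upper[OF T(2) ne(2) this] show ?thesis using len unfolding ln_m_def by simp
    qed
    show ?thesis using gl gu hl hu TL unfolding \<eta>_def by linarith
  qed
  show ?thesis
  proof (intro exI[of _ T] conjI bexI[OF _ d] ballI)
    fix i assume "i \<in> {1..m}"
    from main[OF this] show "\<bar>lse_fun T psg (x i) - lse_fun T psh (x i) - y i\<bar> \<le> \<epsilon>" .
  qed (rule T(2))
qed

end
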